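(* In the option framework described in the context, let the intra-option policies $\pi_o(s,a,\theta)$ be differentiable in $\theta$, and for a vector $\eta$ (of the same dimension as $\theta$) define the compatible function approximator $f^{\pi_o}_\eta(s,a)=\eta^T\frac{\partial\ln\pi_o(s,a,\theta)}{\partial\theta}$ and the squared error $$\epsilon(\eta,\theta)=\sum_{s,o,a}\mu_{\mathcal O}(s,o)\pi_o(s,a,\theta)\big(f^{\pi_o}_\eta(s,a)-a_U(s,o,a)\big)^2 .$$ Let $G_\theta=\sum_{s,o}\mu_{\mathcal O}(s,o)\sum_a\pi_o(s,a,\theta)\frac{\partial\ln\pi_o(s,a,\theta)}{\partial\theta}\big(\frac{\partial\ln\pi_o(s,a,\theta)}{\partial\theta}\big)^T$ (assumed invertible). If $\tilde\eta$ is a local minimum of $\epsilon(\cdot,\theta)$, then $$G_\theta^{-1}\frac{\partial q_{\pi_{\mathcal O}}(s_0,o_0)}{\partial\theta}=\tilde\eta,$$ i.e. $\tilde\eta$ is the natural gradient of the expected discounted return with respect to $\theta$.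
   Context: Finite MDP with states $\mathcal S$, actions $\mathcal A$, transition function $P$, discount $\gamma$; finite option set $\mathcal O$ with intra-option policies $\pi_o(s,a,\theta)$, terminations $\beta_o(s)$ and a policy over options $\pi_{\mathcal O}(s,o)$; in state $s_t$ with option $o_t$ the agent draws $a_t\sim\pi_{o_t}(s_t,\cdot,\theta)$, moves to $s_{t+1}$, and $o_t$ terminates there with probability $\beta_{o_t}(s_{t+1})$, after which a new option is drawn from $\pi_{\mathcal O}(s_{t+1},\cdot)$. Value functions (expected discounted returns): $q_{\pi_{\mathcal O}}(s,o)$ given $S_0=s,O_0=o$; $q_U(s,o,a)$ given $S_0=s,O_0=o,A_0=a$; state-option-action advantage $a_U(s,o,a)=q_U(s,o,a)-q_{\pi_{\mathcal O}}(s,o)$. $\mu_{\mathcal O}(s,o)=\sum_{t\ge0}\gamma^t\Pr(S_t=s,O_t=o\mid s_0,o_0)$ is the discounted weighting of state-option pairs from the start pair $(s_0,o_0)$ (treated as the stationary distribution of the process that terminates with probability $1-\gamma$ per step). The gradient $\partial q_{\pi_{\mathcal O}}(s_0,o_0)/\partial\theta$ is given by the intra-option policy gradient theorem: $\frac{\partial q_{\pi_{\mathcal O}}(s_0,o_0)}{\partial\theta}=\sum_{s,o}\mu_{\mathcal O}(s,o)\sum_a\frac{\partial\pi_o(s,a,\theta)}{\partial\theta}q_U(s,o,a)$. *)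

theory Defs
  imports "HOL-Analysis.Analysis"
begin

text \<open>Option framework at parameter vector theta :: real^'n.
  pol o s a theta : intra-option policy; dpi o s a theta : its gradient in theta.
  States 's, options 'o, actions 'a are finite types.\<close>

definition grad_log_pi ::
  "('o \<Rightarrow> 's \<Rightarrow> 'a \<Rightarrow> real^'n \<Rightarrow> real) \<Rightarrow> ('o \<Rightarrow> 's \<Rightarrow> 'a \<Rightarrow> real^'n \<Rightarrow> real^'n)
   \<Rightarrow> 'o \<Rightarrow> 's \<Rightarrow> 'a \<Rightarrow> real^'n \<Rightarrow> real^'n" where
  "grad_log_pi pol dpi o' s a \<theta> = (1 / pol o' s a \<theta>) *\<^sub>R dpi o' s a \<theta>"

definition compat_fa ::
  "('o \<Rightarrow> 's \<Rightarrow> 'a \<Rightarrow> real^'n \<Rightarrow> real) \<Rightarrow> ('o \<Rightarrow> 's \<Rightarrow> 'a \<Rightarrow> real^'n \<Rightarrow> real^'n)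
   \<Rightarrow> real^'n \<Rightarrow> real^'n \<Rightarrow> 'o \<Rightarrow> 's \<Rightarrow> 'a \<Rightarrow> real" where
  "compat_fa pol dpi \<eta> \<theta> o' s a = \<eta> \<bullet> grad_log_pi pol dpi o' s a \<theta>"

text \<open>Squared error epsilon(eta, theta); mu, qU, qO are the weighting and value functions at theta,
  and the advantage is a_U(s,o,a) = q_U(s,o,a) - q_{pi_O}(s,o).\<close>
definition sq_err ::
  "('s \<Rightarrow> 'o \<Rightarrow> real) \<Rightarrow> ('s \<Rightarrow> 'o \<Rightarrow> 'a \<Rightarrow> real) \<Rightarrow> ('s \<Rightarrow> 'o \<Rightarrow> real)
   \<Rightarrow> ('o \<Rightarrow> 's \<Rightarrow> 'a \<Rightarrow> real^'n \<Rightarrow> real) \<Rightarrow> ('o \<Rightarrow> 's \<Rightarrow> 'a \<Rightarrow> real^'n \<Rightarrow> real^'n)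
   \<Rightarrow> real^'n \<Rightarrow> real^'n \<Rightarrow> real" where
  "sq_err mu qU qO pol dpi \<eta> \<theta> =
     (\<Sum>s\<in>UNIV. \<Sum>o'\<in>UNIV. \<Sum>a\<in>UNIV. mu s o' * pol o' s a \<theta> *
        (compat_fa pol dpi \<eta> \<theta> o' s a - (qU s o' a - qO s o'))\<^sup>2)"

definition fisher_G ::
  "('s \<Rightarrow> 'o \<Rightarrow> real) \<Rightarrow> ('o \<Rightarrow> 's \<Rightarrow> 'a \<Rightarrow> real^'n \<Rightarrow> real) \<Rightarrow> ('o \<Rightarrow> 's \<Rightarrow> 'a \<Rightarrow> real^'n \<Rightarrow> real^'n)
   \<Rightarrow> real^'n \<Rightarrow> real^'n^'n" where
  "fisher_G mu pol dpi \<theta> = (\<chi> i j. \<Sum>s\<in>UNIV. \<Sum>o'\<in>UNIV. mu s o' * (\<Sum>a\<in>UNIV. pol o' s a \<theta> *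
      (grad_log_pi pol dpi o' s a \<theta> $ i) * (grad_log_pi pol dpi o' s a \<theta> $ j)))"

end

theory Submission
  imports Defs
begin

theorem mainTheorem5:
  fixes pol :: "'o::finite \<Rightarrow> 's::finite \<Rightarrow> 'a::finite \<Rightarrow> real^'n \<Rightarrow> real"
    and dpi :: "'o \<Rightarrow> 's \<Rightarrow> 'a \<Rightarrow> real^'n \<Rightarrow> real^'n"
    and mu :: "real^'n \<Rightarrow> 's \<Rightarrow> 'o \<Rightarrow> real"
    and qU :: "real^'n \<Rightarrow> 's \<Rightarrow> 'o \<Rightarrow> 'a \<Rightarrow> real"
    and qO :: "real^'n \<Rightarrow> 's \<Rightarrow> 'o \<Rightarrow> real"
    and dq :: "real^'n"
    and \<theta> \<eta>t :: "real^'n" and s0 :: 's and o0 :: 'o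
  assumes pi_pos: "\<And>o' s a th. pol o' s a th > 0"
    and pi_sum: "\<And>o' s th. (\<Sum>a\<in>UNIV. pol o' s a th) = 1"
    and pi_diff: "\<And>o' s a th. ((\<lambda>x. pol o' s a x) has_derivative (\<lambda>h. dpi o' s a th \<bullet> h)) (at th)"
    and q_diff: "((\<lambda>x. qO x s0 o0) has_derivative (\<lambda>h. dq \<bullet> h)) (at \<theta>)"
    and pg_thm: "dq = (\<Sum>s\<in>UNIV. \<Sum>o'\<in>UNIV. mu \<theta> s o' *\<^sub>R
                        (\<Sum>a\<in>UNIV. qU \<theta> s o' a *\<^sub>R dpi o' s a \<theta>))"
    and G_inv: "invertible (fisher_G (mu \<theta>) pol dpi \<theta>)"
    and local_min: "\<exists>e>0. \<forall>\<eta>. dist \<eta> \<eta>t < e \<longrightarrow>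
                       sq_err (mu \<theta>) (qU \<theta>) (qO \<theta>) pol dpi \<eta>t \<theta> \<le> sq_err (mu \<theta>) (qU \<theta>) (qO \<theta>) pol dpi \<eta> \<theta>"
  shows "matrix_inv (fisher_G (mu \<theta>) pol dpi \<theta>) *v dq = \<eta>t"
proof -
  have dsum: "(\<Sum>a\<in>UNIV. dpi o' s a th) = 0" for o' s th
  proof -
    have d: "((\<lambda>x. \<Sum>a\<in>UNIV. pol o' s a x) has_derivative (\<lambda>h. \<Sum>a\<in>UNIV. dpi o' s a th \<bullet> h)) (at th)"
      by (rule has_derivative_sum) (rule pi_diff)
    have "(\<lambda>h. \<Sum>a\<in>UNIV. dpi o' s a th \<bullet> h) = (\<lambda>h. 0)"
      by (rule has_derivative_local_min[OF d]) (simp add: pi_sum)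
    then have "(\<Sum>a\<in>UNIV. dpi o' s a th \<bullet> (\<Sum>a\<in>UNIV. dpi o' s a th)) = 0"
      by metis
    then have "(\<Sum>a\<in>UNIV. dpi o' s a th) \<bullet> (\<Sum>a\<in>UNIV. dpi o' s a th) = 0"
      by (simp add: inner_sum_left)
    then show ?thesis by simp
  qed
  define g where "g = (\<lambda>o' s a. grad_log_pi pol dpi o' s a \<theta>)"
  define A where "A = (\<lambda>s o' a. qU \<theta> s o' a - qO \<theta> s o')"
  define c where "c = (\<lambda>s o' a. mu \<theta> s o' * pol o' s a \<theta>)"
  have sq: "sq_err (mu \<theta>) (qU \<theta>) (qO \<theta>) pol dpi \<eta> \<theta> =
     (\<Sum>s\<in>UNIV. \<Sum>o'\<in>UNIV. \<Sum>a\<in>UNIV. c s o' a * (\<eta> \<bullet> g o' s a - A s o' a)\<^sup>2)" for \<eta>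
    unfolding sq_err_def compat_fa_def g_def A_def c_def by simp
  have der: "((\<lambda>\<eta>. sq_err (mu \<theta>) (qU \<theta>) (qO \<theta>) pol dpi \<eta> \<theta>) has_derivative
     (\<lambda>h. \<Sum>s\<in>UNIV. \<Sum>o'\<in>UNIV. \<Sum>a\<in>UNIV. c s o' a * (2 * (\<eta>t \<bullet> g o' s a - A s o' a) * (h \<bullet> g o' s a)))) (at \<eta>t)"
    unfolding sq
    by (intro has_derivative_sum has_derivative_mult_right)
       (auto intro!: derivative_eq_intros simp: power2_eq_square)
  have ev: "eventually (\<lambda>y. sq_err (mu \<theta>) (qU \<theta>) (qO \<theta>) pol dpi \<eta>t \<theta> \<le> sq_err (mu \<theta>) (qU \<theta>) (qO \<theta>) pol dpi y \<theta>) (at \<eta>t)"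
    using local_min unfolding eventually_at by (metis dist_commute)
  have D0: "(\<lambda>h. \<Sum>s\<in>UNIV. \<Sum>o'\<in>UNIV. \<Sum>a\<in>UNIV. c s o' a * (2 * (\<eta>t \<bullet> g o' s a - A s o' a) * (h \<bullet> g o' s a))) = (\<lambda>h. 0)"
    by (rule has_derivative_local_min[OF der ev])
  have comp: "(\<Sum>s\<in>UNIV. \<Sum>o'\<in>UNIV. \<Sum>a\<in>UNIV. c s o' a * (\<eta>t \<bullet> g o' s a) * g o' s a $ i) =
     (\<Sum>s\<in>UNIV. \<Sum>o'\<in>UNIV. \<Sum>a\<in>UNIV. c s o' a * A s o' a * g o' s a $ i)" for i
  proof -
    have "(\<Sum>s\<in>UNIV. \<Sum>o'\<in>UNIV. \<Sum>a\<in>UNIV. c s o' a * (2 * (\<eta>t \<bullet> g o' s a - A s o' a) * (axis i 1 \<bullet> g o' s a))) = 0"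
      using fun_cong[OF D0, of "axis i 1"] by simp
    moreover have "(\<Sum>s\<in>UNIV. \<Sum>o'\<in>UNIV. \<Sum>a\<in>UNIV. c s o' a * (2 * (\<eta>t \<bullet> g o' s a - A s o' a) * (axis i 1 \<bullet> g o' s a)))
       = 2 * ((\<Sum>s\<in>UNIV. \<Sum>o'\<in>UNIV. \<Sum>a\<in>UNIV. c s o' a * (\<eta>t \<bullet> g o' s a) * g o' s a $ i) -
     (\<Sum>s\<in>UNIV. \<Sum>o'\<in>UNIV. \<Sum>a\<in>UNIV. c s o' a * A s o' a * g o' s a $ i))"
    proof -
      have "(\<Sum>s\<in>UNIV. \<Sum>o'\<in>UNIV. \<Sum>a\<in>UNIV. c s o' a * (2 * (\<eta>t \<bullet> g o' s a - A s o' a) * (axis i 1 \<bullet> g o' s a)))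
        = (\<Sum>s\<in>UNIV. \<Sum>o'\<in>UNIV. \<Sum>a\<in>UNIV. 2 * (c s o' a * (\<eta>t \<bullet> g o' s a) * g o' s a $ i) - 2 * (c s o' a * A s o' a * g o' s a $ i))"
        by (intro sum.cong refl) (simp add: inner_axis' algebra_simps)
      also have "\<dots> = 2 * ((\<Sum>s\<in>UNIV. \<Sum>o'\<in>UNIV. \<Sum>a\<in>UNIV. c s o' a * (\<eta>t \<bullet> g o' s a) * g o' s a $ i) -
     (\<Sum>s\<in>UNIV. \<Sum>o'\<in>UNIV. \<Sum>a\<in>UNIV. c s o' a * A s o' a * g o' s a $ i))"
        by (simp only: sum_subtractf sum_distrib_left right_diff_distrib)
      finally show ?thesis .
    qed
    ultimately show ?thesis by simp
  qed
  have Gij: "fisher_G (mu \<theta>) pol dpi \<theta> $ i $ j = (\<Sum>s\<in>UNIV. \<Sum>o'\<in>UNIV. \<Sum>a\<in>UNIV. c s o' a * g o' s a $ i * g o' s a $ j)" for i j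
    unfolding fisher_G_def c_def g_def by (simp add: sum_distrib_left mult.assoc)
  have Gv: "(fisher_G (mu \<theta>) pol dpi \<theta> *v \<eta>t) $ i = (\<Sum>s\<in>UNIV. \<Sum>o'\<in>UNIV. \<Sum>a\<in>UNIV. c s o' a * (\<eta>t \<bullet> g o' s a) * g o' s a $ i)" for i
  proof -
    have "(fisher_G (mu \<theta>) pol dpi \<theta> *v \<eta>t) $ i = (\<Sum>j\<in>UNIV. (\<Sum>s\<in>UNIV. \<Sum>o'\<in>UNIV. \<Sum>a\<in>UNIV. c s o' a * g o' s a $ i * g o' s a $ j) * \<eta>t $ j)"
      by (simp add: matrix_vector_mult_def Gij)
    also have "\<dots> = (\<Sum>j\<in>UNIV. \<Sum>s\<in>UNIV. \<Sum>o'\<in>UNIV. \<Sum>a\<in>UNIV. c s o' a * g o' s a $ i * g o' s a $ j * \<eta>t $ j)"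
      by (simp add: sum_distrib_right)
    also have "\<dots> = (\<Sum>s\<in>UNIV. \<Sum>o'\<in>UNIV. \<Sum>a\<in>UNIV. \<Sum>j\<in>UNIV. c s o' a * g o' s a $ i * g o' s a $ j * \<eta>t $ j)"
      apply (rule trans[OF sum.swap]) apply (rule sum.cong[OF refl])
      apply (rule trans[OF sum.swap]) apply (rule sum.cong[OF refl])
      apply (rule sum.swap) done
    also have "\<dots> = (\<Sum>s\<in>UNIV. \<Sum>o'\<in>UNIV. \<Sum>a\<in>UNIV. c s o' a * (\<eta>t \<bullet> g o' s a) * g o' s a $ i)"
      by (intro sum.cong refl) (simp add: inner_vec_def sum_distrib_left sum_distrib_right mult_ac)
    finally show ?thesis .
  qed
  have dpig: "dpi o' s a \<theta> = pol o' s a \<theta> *\<^sub>R g o' s a" for o' s a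
    using pi_pos[of o' s a \<theta>] unfolding g_def grad_log_pi_def by simp
  have dqi: "dq $ i = (\<Sum>s\<in>UNIV. \<Sum>o'\<in>UNIV. \<Sum>a\<in>UNIV. c s o' a * A s o' a * g o' s a $ i)" for i
  proof -
    have z: "(\<Sum>a\<in>UNIV. qO \<theta> s o' * dpi o' s a \<theta> $ i) = 0" for s o'
      using arg_cong[OF dsum[of o' s \<theta>], of "\<lambda>v. qO \<theta> s o' * v $ i"]
      by (simp add: sum_distrib_left sum_component)
    have "dq $ i = (\<Sum>s\<in>UNIV. \<Sum>o'\<in>UNIV. mu \<theta> s o' * (\<Sum>a\<in>UNIV. qU \<theta> s o' a * dpi o' s a \<theta> $ i))"
      by (simp add: pg_thm sum_component)
    also have "\<dots> = (\<Sum>s\<in>UNIV. \<Sum>o'\<in>UNIV. mu \<theta> s o' * (\<Sum>a\<in>UNIV. qU \<theta> s o' a * dpi o' s a \<theta> $ i - qO \<theta> s o' * dpi o' s a \<theta> $ i))"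
      by (simp add: sum_subtractf z)
    also have "\<dots> = (\<Sum>s\<in>UNIV. \<Sum>o'\<in>UNIV. \<Sum>a\<in>UNIV. c s o' a * A s o' a * g o' s a $ i)"
    proof -
      have pw: "mu \<theta> s o' * (qU \<theta> s o' a * dpi o' s a \<theta> $ i - qO \<theta> s o' * dpi o' s a \<theta> $ i) = c s o' a * A s o' a * g o' s a $ i" for s o' a
        by (simp add: dpig c_def A_def algebra_simps)
      show ?thesis by (simp only: sum_distrib_left pw)
    qed
    finally show ?thesis .
  qed
  have Geq: "fisher_G (mu \<theta>) pol dpi \<theta> *v \<eta>t = dq"
    by (simp add: vec_eq_iff Gv dqi comp)
  obtain Ai where Ai: "Ai ** fisher_G (mu \<theta>) pol dpi \<theta> = mat 1" "fisher_G (mu \<theta>) pol dpi \<theta> ** Ai = mat 1"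
    using G_inv unfolding invertible_def by blast
  have "matrix_inv (fisher_G (mu \<theta>) pol dpi \<theta>) ** fisher_G (mu \<theta>) pol dpi \<theta> = mat 1"
    unfolding matrix_inv_def by (rule someI2[where a=Ai]) (use Ai in auto)
  then show ?thesis
    by (metis Geq matrix_vector_mul_assoc matrix_vector_mul_lid)
qed
end
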